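(* Let $H=\Theta(2,4,4,4)$ and $G=H^2$. Then $G$ is equitably $6$-choosable.
   Context: $\Theta(l_1,\ldots,l_m)$ denotes the graph consisting of two vertices $u,w$ joined by $m$ internally disjoint paths of lengths $l_1,\ldots,l_m$. For a graph $H$, $H^2$ has vertex set $V(H)$ with two vertices adjacent iff their distance in $H$ is 1 or 2. A $k$-assignment $L$ assigns to each vertex a set of exactly $k$ colors; an equitable $L$-coloring of $G$ is a proper coloring $f$ with $f(v)\in L(v)$ such that no color is used more than $\lceil |V(G)|/k\rceil$ times; $G$ is equitably $k$-choosable if it has an equitable $L$-coloring for every $k$-assignment $L$. *)

theory Defs
  imports Complex_Main
begin

text \<open>Simple graphs are given by a vertex set V and an adjacency predicate E
  (intended symmetric and irreflexive on V).\<close>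

datatype theta_vertex = TU | TW | TM nat nat

text \<open>Theta(l_1,...,l_m): two vertices TU, TW joined by m internally disjoint paths;
  path i has vertices TU = pv i 0, TM i 1, ..., TM i (l_i - 1), pv i l_i = TW.\<close>

definition theta_pv :: "nat list \<Rightarrow> nat \<Rightarrow> nat \<Rightarrow> theta_vertex" where
  "theta_pv ls i j = (if j = 0 then TU else if j = ls ! i then TW else TM i j)"

definition theta_V :: "nat list \<Rightarrow> theta_vertex set" where
  "theta_V ls = {TU, TW} \<union> {TM i j | i j. i < length ls \<and> 0 < j \<and> j < ls ! i}"

definition theta_E :: "nat list \<Rightarrow> theta_vertex \<Rightarrow> theta_vertex \<Rightarrow> bool" where
  "theta_E ls x y = (\<exists>i j. i < length ls \<and> j < ls ! i \<and>
      ((x = theta_pv ls i j \<and> y = theta_pv ls i (Suc j)) \<or>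
       (y = theta_pv ls i j \<and> x = theta_pv ls i (Suc j))))"

definition graph_square :: "'a set \<Rightarrow> ('a \<Rightarrow> 'a \<Rightarrow> bool) \<Rightarrow> 'a \<Rightarrow> 'a \<Rightarrow> bool" where
  "graph_square V E x y = (x \<in> V \<and> y \<in> V \<and> x \<noteq> y \<and>
      (E x y \<or> (\<exists>z\<in>V. E x z \<and> E z y)))"

definition k_assignment :: "'a set \<Rightarrow> nat \<Rightarrow> ('a \<Rightarrow> 'c set) \<Rightarrow> bool" where
  "k_assignment V k L = (\<forall>v\<in>V. finite (L v) \<and> card (L v) = k)"

definition equitable_L_coloring ::
    "'a set \<Rightarrow> ('a \<Rightarrow> 'a \<Rightarrow> bool) \<Rightarrow> nat \<Rightarrow> ('a \<Rightarrow> 'c set) \<Rightarrow> ('a \<Rightarrow> 'c) \<Rightarrow> bool" where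
  "equitable_L_coloring V E k L f =
     ((\<forall>v\<in>V. f v \<in> L v) \<and>
      (\<forall>x\<in>V. \<forall>y\<in>V. E x y \<longrightarrow> f x \<noteq> f y) \<and>
      (\<forall>c. real (card {v\<in>V. f v = c}) \<le> of_int \<lceil>real (card V) / real k\<rceil>))"

definition equitably_choosable :: "'a set \<Rightarrow> ('a \<Rightarrow> 'a \<Rightarrow> bool) \<Rightarrow> nat \<Rightarrow> 'c itself \<Rightarrow> bool" where
  "equitably_choosable V E k _ =
     (\<forall>L :: 'a \<Rightarrow> 'c set. k_assignment V k L \<longrightarrow> (\<exists>f. equitable_L_coloring V E k L f))"

end

theory Submission
  imports Defs
begin


lemma kernel_coloring:
  fixes D :: "'v \<Rightarrow> 'v \<Rightarrow> bool" and L :: "'v \<Rightarrow> 'c set"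
  assumes "finite W"
    and "\<And>X. X \<subseteq> W \<Longrightarrow> \<exists>K\<subseteq>X. (\<forall>x\<in>K. \<forall>y\<in>K. \<not> D x y) \<and> (\<forall>v\<in>X. v \<in> K \<or> (\<exists>u\<in>K. D v u))"
    and "\<And>v. v \<in> W \<Longrightarrow> finite (L v) \<and> card {u\<in>W. D v u} < card (L v)"
  shows "\<exists>f. (\<forall>v\<in>W. f v \<in> L v) \<and> (\<forall>x\<in>W. \<forall>y\<in>W. D x y \<longrightarrow> f x \<noteq> f y)"
  using assms
proof (induction "card W" arbitrary: W L rule: less_induct)
  case less
  show ?case
  proof (cases "W = {}")
    case True then show ?thesis by auto
  next
    case False
    then obtain v0 where v0: "v0 \<in> W" by auto
    from less.prems(3)[OF v0] have "card (L v0) > 0" by linarith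
    then obtain c where c: "c \<in> L v0" by (metis card_gt_0_iff ex_in_conv)
    define U where "U = {v\<in>W. c \<in> L v}"
    have "U \<subseteq> W" unfolding U_def by auto
    from less.prems(2)[OF this] obtain K where KU: "K \<subseteq> U"
      and Kind: "\<forall>x\<in>K. \<forall>y\<in>K. \<not> D x y" and Kabs: "\<forall>v\<in>U. v \<in> K \<or> (\<exists>u\<in>K. D v u)"
      by blast
    have v0U: "v0 \<in> U" using v0 c U_def by auto
    have "K \<noteq> {}" using Kabs v0U by auto
    have KW: "K \<subseteq> W" using KU U_def by auto
    define W' where "W' = W - K"
    define L' where "L' = (\<lambda>v. L v - {c})"
    have fin': "finite W'" using less.prems(1) W'_def by auto
    have lt: "card W' < card W"
    proof -
      have fK: "finite K" using KW less.prems(1) finite_subset by blast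
      then have "card K > 0" using \<open>K \<noteq> {}\<close> by auto
      moreover have "card W' = card W - card K" unfolding W'_def using fK KW by (simp add: card_Diff_subset)
      moreover have "card K \<le> card W" using KW less.prems(1) by (simp add: card_mono)
      ultimately show ?thesis by linarith
    qed
    have kp': "\<exists>K\<subseteq>X. (\<forall>x\<in>K. \<forall>y\<in>K. \<not> D x y) \<and> (\<forall>v\<in>X. v \<in> K \<or> (\<exists>u\<in>K. D v u))"
      if "X \<subseteq> W'" for X
    proof -
      have "X \<subseteq> W" using that W'_def by auto
      then show ?thesis by (rule less.prems(2))
    qed
    have deg': "finite (L' v) \<and> card {u\<in>W'. D v u} < card (L' v)" if vW': "v \<in> W'" for v
    proof -
      have vW: "v \<in> W" "v \<notin> K" using vW' W'_def by auto
      have finL: "finite (L v)" and d: "card {u\<in>W. D v u} < card (L v)" using less.prems(3)[OF vW(1)] by auto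
      have finS: "finite {u\<in>W. D v u}" using less.prems(1) by auto
      have sub: "{u\<in>W'. D v u} \<subseteq> {u\<in>W. D v u}" using W'_def by auto
      show ?thesis
      proof (cases "c \<in> L v")
        case True
        then have "v \<in> U" using vW U_def by auto
        then obtain u where u: "u \<in> K" "D v u" using Kabs vW(2) by auto
        have "{u\<in>W'. D v u} \<subset> {u\<in>W. D v u}"
          using sub u KW W'_def by blast
        then have "card {u\<in>W'. D v u} < card {u\<in>W. D v u}"
          using finS by (simp add: psubset_card_mono)
        moreover have "card (L' v) = card (L v) - 1" using True finL L'_def by simp
        ultimately show ?thesis using d finL L'_def by auto
      next
        case False
        then have "L' v = L v" using L'_def by auto
        moreover have "card {u\<in>W'. D v u} \<le> card {u\<in>W. D v u}"
          using sub finS by (simp add: card_mono)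
        ultimately show ?thesis using d finL by auto
      qed
    qed
    have "\<exists>f. (\<forall>v\<in>W'. f v \<in> L' v) \<and> (\<forall>x\<in>W'. \<forall>y\<in>W'. D x y \<longrightarrow> f x \<noteq> f y)"
      by (rule less.hyps[OF lt fin' kp' deg'])
    then obtain f' where f'L: "\<forall>v\<in>W'. f' v \<in> L' v" and f'p: "\<forall>x\<in>W'. \<forall>y\<in>W'. D x y \<longrightarrow> f' x \<noteq> f' y"
      by blast
    define f where "f = (\<lambda>v. if v \<in> K then c else f' v)"
    show ?thesis
    proof (intro exI[of _ f] conjI ballI impI)
      fix v assume "v \<in> W"
      then show "f v \<in> L v"
        using f'L KU U_def W'_def L'_def f_def by (cases "v \<in> K") auto
    next
      fix x y assume xy: "x \<in> W" "y \<in> W" "D x y"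
      show "f x \<noteq> f y"
      proof (cases "x \<in> K")
        case True
        then show ?thesis
          using Kind xy f'L W'_def L'_def f_def by (cases "y \<in> K") auto
      next
        case False
        then show ?thesis
          using f'L f'p xy W'_def L'_def f_def by (cases "y \<in> K") auto
      qed
    qed
  qed
qed



datatype vx = Vu | Vw | Vm | Va1 | Vb1 | Vc1 | Va2 | Vb2 | Vc2 | Va3 | Vb3 | Vc3

definition allv :: "vx list" where
  "allv = [Vu, Vw, Vm, Va1, Vb1, Vc1, Va2, Vb2, Vc2, Va3, Vb3, Vc3]"

lemma in_allv: "x \<in> set allv"
  by (cases x) (simp_all add: allv_def)

fun outn :: "vx \<Rightarrow> vx list" where
  "outn Vu = [Vw, Vm, Vb1, Vb2]"
| "outn Vw = []"
| "outn Vm = [Vw, Vc2]"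
| "outn Va1 = [Vu, Vm, Vb1, Vc1]"
| "outn Vb1 = [Vw, Vc1, Vb2, Vc2, Vc3]"
| "outn Vc1 = [Vw, Vm, Vb2, Vc2, Vc3]"
| "outn Va2 = [Vu, Vm, Va1, Vb2, Vc2]"
| "outn Vb2 = [Vw, Vc2, Vc3]"
| "outn Vc2 = [Vw]"
| "outn Va3 = [Vu, Vm, Va1, Va2, Vb3]"
| "outn Vb3 = [Vu, Vw, Vm, Va1, Va2]"
| "outn Vc3 = [Vw, Vm, Vc2, Va3, Vb3]"

definition arc :: "vx \<Rightarrow> vx \<Rightarrow> bool" where
  "arc x y = (y \<in> set (outn x))"

datatype ktree = KLeaf "vx list" | KNode vx ktree ktree

fun valid :: "ktree \<Rightarrow> vx list \<Rightarrow> vx list \<Rightarrow> bool" where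
  "valid (KLeaf K) P Q = (list_all (\<lambda>k. k \<in> set P) K \<and>
      list_all (\<lambda>x. list_all (\<lambda>y. \<not> arc x y) K) K \<and>
      list_all (\<lambda>v. v \<in> set Q \<or> v \<in> set K \<or> list_ex (arc v) K) allv)"
| "valid (KNode v t1 t2) P Q = (valid t1 (v#P) Q \<and> valid t2 P (v#Q))"

lemma valid_sound:
  "valid t P Q \<Longrightarrow> set P \<subseteq> X \<Longrightarrow> set Q \<inter> X = {} \<Longrightarrow>
     \<exists>K\<subseteq>X. (\<forall>x\<in>K. \<forall>y\<in>K. \<not> arc x y) \<and> (\<forall>v\<in>X. v \<in> K \<or> (\<exists>u\<in>K. arc v u))"
proof (induction t arbitrary: P Q)
  case (KLeaf K)
  show ?case
  proof (intro exI[of _ "set K"] conjI ballI)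
    show "set K \<subseteq> X" using KLeaf by (auto simp: list_all_iff)
  next
    fix x y assume "x \<in> set K" "y \<in> set K"
    then show "\<not> arc x y" using KLeaf by (auto simp: list_all_iff)
  next
    fix v assume "v \<in> X"
    then have "v \<notin> set Q" using KLeaf by auto
    moreover have "v \<in> set Q \<or> v \<in> set K \<or> list_ex (arc v) K"
      using KLeaf in_allv[of v] by (auto simp: list_all_iff)
    ultimately show "v \<in> set K \<or> (\<exists>u\<in>set K. arc v u)" by (auto simp: list_ex_iff)
  qed
next
  case (KNode v t1 t2)
  show ?case
  proof (cases "v \<in> X")
    case True
    then show ?thesis using KNode.IH(1)[of "v#P" Q] KNode.prems by auto
  next
    case False
    then show ?thesis using KNode.IH(2)[of P "v#Q"] KNode.prems by auto
  qed
qed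

definition the_tree :: ktree where
  "the_tree = KNode Vu (KNode Vw (KNode Va1 (KLeaf [Vw, Va1]) (KNode Va2 (KLeaf [Vw, Va2]) (KNode Va3 (KLeaf [Vw, Va3]) (KLeaf [Vw])))) (KNode Vc2 (KLeaf [Vu, Vc2]) (KNode Vm (KNode Vb2 (KLeaf [Vm, Vb2]) (KNode Vb1 (KLeaf [Vm, Vb1]) (KLeaf [Vm]))) (KNode Vc3 (KLeaf [Vu, Vc3]) (KNode Va1 (KNode Vb2 (KLeaf [Va1, Vb2]) (KNode Vc1 (KLeaf [Vu, Vc1]) (KNode Vb1 (KNode Va2 (KLeaf [Vb1, Va2]) (KNode Vb3 (KLeaf [Vb1, Vb3]) (KNode Va3 (KLeaf [Vb1, Va3]) (KLeaf [Vb1])))) (KLeaf [Vu])))) (KNode Vb1 (KNode Vc1 (KNode Vb2 (KNode Vb3 (KLeaf [Vb2, Vb3]) (KNode Va3 (KLeaf [Vb2, Va3]) (KLeaf [Vb2]))) (KLeaf [Vu, Vc1])) (KNode Va2 (KNode Vb2 (KNode Vb3 (KLeaf [Vb2, Vb3]) (KNode Va3 (KLeaf [Vb2, Va3]) (KLeaf [Vb2]))) (KLeaf [Vb1, Va2])) (KNode Vb2 (KNode Vb3 (KLeaf [Vb2, Vb3]) (KNode Va3 (KLeaf [Vb2, Va3]) (KLeaf [Vb2]))) (KNode Vb3 (KLeaf [Vb1, Vb3]) (KNode Va3 (KLeaf [Vb1, Va3]) (KLeaf [Vb1])))))) (KNode Vc1 (KNode Vb2 (KNode Vb3 (KLeaf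 [Vb2, Vb3]) (KNode Va3 (KLeaf [Vb2, Va3]) (KLeaf [Vb2]))) (KLeaf [Vu, Vc1])) (KNode Vb2 (KNode Vb3 (KLeaf [Vb2, Vb3]) (KNode Va3 (KLeaf [Vb2, Va3]) (KLeaf [Vb2]))) (KLeaf [Vu]))))))))) (KNode Vw (KNode Va1 (KLeaf [Vw, Va1]) (KNode Va2 (KLeaf [Vw, Va2]) (KNode Va3 (KLeaf [Vw, Va3]) (KLeaf [Vw])))) (KNode Vm (KNode Va1 (KNode Vc2 (KLeaf [Va1, Vc2]) (KNode Vb2 (KLeaf [Vm, Vb2]) (KNode Vb1 (KLeaf [Vm, Vb1]) (KLeaf [Vm])))) (KNode Vb1 (KNode Vc1 (KNode Va2 (KNode Vb2 (KNode Vc2 (KNode Vb3 (KLeaf [Vc2, Vb3]) (KNode Va3 (KLeaf [Vc2, Va3]) (KLeaf [Vc2]))) (KLeaf [Vm, Vb2])) (KNode Vc2 (KNode Vb3 (KLeaf [Vc2, Vb3]) (KNode Va3 (KLeaf [Vc2, Va3]) (KLeaf [Vc2]))) (KLeaf [Vm, Vb1]))) (KNode Vb2 (KNode Vc2 (KNode Vb3 (KLeaf [Vc2, Vb3]) (KNode Va3 (KLeaf [Vc2, Va3]) (KLeaf [Vc2]))) (KLeaf [Vm, Vb2])) (KNode Vc2 (KNode Vb3 (KLeaf [Vc2, Vb3]) (KNode Va3 (KLeaf [Vc2, Va3]) (KLeaf [Vc2]))) (KLeaf [Vm, Vb1])))) (KNode Va2 (KNode Vb2 (KNode Vc2 (KNode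 Vb3 (KLeaf [Vc2, Vb3]) (KNode Va3 (KLeaf [Vc2, Va3]) (KLeaf [Vc2]))) (KLeaf [Vm, Vb2])) (KNode Vc2 (KNode Vb3 (KLeaf [Vc2, Vb3]) (KNode Va3 (KLeaf [Vc2, Va3]) (KLeaf [Vc2]))) (KLeaf [Vm, Vb1]))) (KNode Vb2 (KNode Vc2 (KNode Vb3 (KLeaf [Vc2, Vb3]) (KNode Va3 (KLeaf [Vc2, Va3]) (KLeaf [Vc2]))) (KLeaf [Vm, Vb2])) (KNode Vc2 (KNode Vb3 (KLeaf [Vc2, Vb3]) (KNode Va3 (KLeaf [Vc2, Va3]) (KLeaf [Vc2]))) (KLeaf [Vm, Vb1]))))) (KNode Vc1 (KNode Va2 (KNode Vb2 (KNode Vc2 (KNode Vb3 (KLeaf [Vc2, Vb3]) (KNode Va3 (KLeaf [Vc2, Va3]) (KLeaf [Vc2]))) (KLeaf [Vm, Vb2])) (KNode Vc2 (KNode Vb3 (KLeaf [Vc2, Vb3]) (KNode Va3 (KLeaf [Vc2, Va3]) (KLeaf [Vc2]))) (KLeaf [Vm]))) (KNode Vb2 (KNode Vc2 (KNode Vb3 (KLeaf [Vc2, Vb3]) (KNode Va3 (KLeaf [Vc2, Va3]) (KLeaf [Vc2]))) (KLeaf [Vm, Vb2])) (KNode Vc2 (KNode Vb3 (KLeaf [Vc2, Vb3]) (KNode Va3 (KLeaf [Vc2, Va3]) (KLeaf [Vc2]))) (KLeaf [Vm])))) (KNode Va2 (KNode Vb2 (KNode Vc2 (KNode Vb3 (KLeaf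 [Vc2, Vb3]) (KNode Va3 (KLeaf [Vc2, Va3]) (KLeaf [Vc2]))) (KLeaf [Vm, Vb2])) (KNode Vc2 (KNode Vb3 (KLeaf [Vc2, Vb3]) (KNode Va3 (KLeaf [Vc2, Va3]) (KLeaf [Vc2]))) (KLeaf [Vm]))) (KNode Vb2 (KNode Vc2 (KNode Vb3 (KLeaf [Vc2, Vb3]) (KNode Va3 (KLeaf [Vc2, Va3]) (KLeaf [Vc2]))) (KLeaf [Vm, Vb2])) (KNode Vc2 (KNode Vb3 (KLeaf [Vc2, Vb3]) (KNode Va3 (KLeaf [Vc2, Va3]) (KLeaf [Vc2]))) (KLeaf [Vm]))))))) (KNode Va1 (KNode Vc2 (KLeaf [Va1, Vc2]) (KNode Vc3 (KLeaf [Va1, Vc3]) (KNode Vb2 (KLeaf [Va1, Vb2]) (KNode Vb1 (KNode Vc1 (KNode Va2 (KLeaf [Vc1, Va2]) (KNode Vb3 (KLeaf [Vc1, Vb3]) (KNode Va3 (KLeaf [Vc1, Va3]) (KLeaf [Vc1])))) (KNode Va2 (KLeaf [Vb1, Va2]) (KNode Vb3 (KLeaf [Vb1, Vb3]) (KNode Va3 (KLeaf [Vb1, Va3]) (KLeaf [Vb1]))))) (KNode Vc1 (KNode Va2 (KLeaf [Vc1, Va2]) (KNode Vb3 (KLeaf [Vc1, Vb3]) (KNode Va3 (KLeaf [Vc1, Va3]) (KLeaf [Vc1])))) (KLeaf [Va1])))))) (KNode Vb1 (KNode Vc1 (KNode Va2 (KNode Vb2 (KNode Vc2 (KNode Vb3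 (KLeaf [Vc2, Vb3]) (KNode Va3 (KLeaf [Vc2, Va3]) (KLeaf [Vc2]))) (KNode Vb3 (KLeaf [Vb2, Vb3]) (KNode Va3 (KLeaf [Vb2, Va3]) (KNode Vc3 (KLeaf [Va2, Vc3]) (KLeaf [Vb2]))))) (KNode Vc2 (KNode Vb3 (KLeaf [Vc2, Vb3]) (KNode Va3 (KLeaf [Vc2, Va3]) (KLeaf [Vc2]))) (KNode Vc3 (KLeaf [Va2, Vc3]) (KLeaf [Vc1, Va2])))) (KNode Vb2 (KNode Vc2 (KNode Vb3 (KLeaf [Vc2, Vb3]) (KNode Va3 (KLeaf [Vc2, Va3]) (KLeaf [Vc2]))) (KNode Vb3 (KLeaf [Vb2, Vb3]) (KNode Va3 (KLeaf [Vb2, Va3]) (KNode Vc3 (KLeaf [Vc3]) (KLeaf [Vb2]))))) (KNode Vc2 (KNode Vb3 (KLeaf [Vc2, Vb3]) (KNode Va3 (KLeaf [Vc2, Va3]) (KLeaf [Vc2]))) (KNode Vb3 (KLeaf [Vc1, Vb3]) (KNode Va3 (KLeaf [Vc1, Va3]) (KNode Vc3 (KLeaf [Vc3]) (KLeaf [Vc1]))))))) (KNode Va2 (KNode Vb2 (KNode Vc2 (KNode Vb3 (KLeaf [Vc2, Vb3]) (KNode Va3 (KLeaf [Vc2, Va3]) (KLeaf [Vc2]))) (KNode Vb3 (KLeaf [Vb2, Vb3]) (KNode Va3 (KLeaf [Vb2, Va3]) (KNode Vc3 (KLeaf [Va2, Vc3]) (KLeaf [Vb2]))))) (KNode Vc2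 (KNode Vb3 (KLeaf [Vc2, Vb3]) (KNode Va3 (KLeaf [Vc2, Va3]) (KLeaf [Vc2]))) (KNode Vc3 (KLeaf [Va2, Vc3]) (KLeaf [Vb1, Va2])))) (KNode Vb2 (KNode Vc2 (KNode Vb3 (KLeaf [Vc2, Vb3]) (KNode Va3 (KLeaf [Vc2, Va3]) (KLeaf [Vc2]))) (KNode Vb3 (KLeaf [Vb2, Vb3]) (KNode Va3 (KLeaf [Vb2, Va3]) (KNode Vc3 (KLeaf [Vc3]) (KLeaf [Vb2]))))) (KNode Vc2 (KNode Vb3 (KLeaf [Vc2, Vb3]) (KNode Va3 (KLeaf [Vc2, Va3]) (KLeaf [Vc2]))) (KNode Vb3 (KLeaf [Vb1, Vb3]) (KNode Va3 (KLeaf [Vb1, Va3]) (KNode Vc3 (KLeaf [Vc3]) (KLeaf [Vb1])))))))) (KNode Vc1 (KNode Va2 (KNode Vb2 (KNode Vc2 (KNode Vb3 (KLeaf [Vc2, Vb3]) (KNode Va3 (KLeaf [Vc2, Va3]) (KLeaf [Vc2]))) (KNode Vb3 (KLeaf [Vb2, Vb3]) (KNode Va3 (KLeaf [Vb2, Va3]) (KNode Vc3 (KLeaf [Va2, Vc3]) (KLeaf [Vb2]))))) (KNode Vc2 (KNode Vb3 (KLeaf [Vc2, Vb3]) (KNode Va3 (KLeaf [Vc2, Va3]) (KLeaf [Vc2]))) (KNode Vc3 (KLeaf [Va2, Vc3]) (KLeaf [Vc1, Va2])))) (KNode Vb2 (KNode Vc2 (KNode Vb3 (KLeaf [Vc2,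 Vb3]) (KNode Va3 (KLeaf [Vc2, Va3]) (KLeaf [Vc2]))) (KNode Vb3 (KLeaf [Vb2, Vb3]) (KNode Va3 (KLeaf [Vb2, Va3]) (KNode Vc3 (KLeaf [Vc3]) (KLeaf [Vb2]))))) (KNode Vc2 (KNode Vb3 (KLeaf [Vc2, Vb3]) (KNode Va3 (KLeaf [Vc2, Va3]) (KLeaf [Vc2]))) (KNode Vb3 (KLeaf [Vc1, Vb3]) (KNode Va3 (KLeaf [Vc1, Va3]) (KNode Vc3 (KLeaf [Vc3]) (KLeaf [Vc1]))))))) (KNode Va2 (KNode Vb2 (KNode Vc2 (KNode Vb3 (KLeaf [Vc2, Vb3]) (KNode Va3 (KLeaf [Vc2, Va3]) (KLeaf [Vc2]))) (KNode Vb3 (KLeaf [Vb2, Vb3]) (KNode Va3 (KLeaf [Vb2, Va3]) (KNode Vc3 (KLeaf [Va2, Vc3]) (KLeaf [Vb2]))))) (KNode Vc2 (KNode Vb3 (KLeaf [Vc2, Vb3]) (KNode Va3 (KLeaf [Vc2, Va3]) (KLeaf [Vc2]))) (KNode Vc3 (KLeaf [Va2, Vc3]) (KLeaf [Va2])))) (KNode Vb2 (KNode Vc2 (KNode Vb3 (KLeaf [Vc2, Vb3]) (KNode Va3 (KLeaf [Vc2, Va3]) (KLeaf [Vc2]))) (KNode Vb3 (KLeaf [Vb2, Vb3]) (KNode Va3 (KLeaf [Vb2, Va3]) (KNode Vc3 (KLeaf [Vc3]) (KLeaf [Vb2]))))) (KNode Vc2 (KNode Vb3 (KLeaf [Vc2,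 Vb3]) (KNode Va3 (KLeaf [Vc2, Va3]) (KLeaf [Vc2]))) (KNode Vb3 (KLeaf [Vb3]) (KNode Va3 (KLeaf [Va3]) (KNode Vc3 (KLeaf [Vc3]) (KLeaf []))))))))))))"

lemma valid_tree: "valid the_tree [] []"
  unfolding the_tree_def by code_simp

lemma kernels:
  "\<exists>K\<subseteq>X. (\<forall>x\<in>K. \<forall>y\<in>K. \<not> arc x y) \<and> (\<forall>v\<in>X. v \<in> K \<or> (\<exists>u\<in>K. arc v u))"
  using valid_sound[OF valid_tree] by simp


lemma len4: "length [2,4,4,4::nat] = 4" by simp
lemma ij: "(i < 4 \<and> 0 < j \<and> j < [2,4,4,4::nat]!i) \<longleftrightarrow>
   (i = 0 \<and> j = 1) \<or> (i = 1 \<and> (j = 1 \<or> j = 2 \<or> j = 3)) \<or> (i = 2 \<and> (j = 1 \<or> j = 2 \<or> j = 3)) \<or> (i = 3 \<and> (j = 1 \<or> j = 2 \<or> j = 3))"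
proof
  assume h: "i < 4 \<and> 0 < j \<and> j < [2,4,4,4::nat]!i"
  then have "i = 0 \<or> i = 1 \<or> i = 2 \<or> i = 3" by arith
  then show "(i = 0 \<and> j = 1) \<or> (i = 1 \<and> (j = 1 \<or> j = 2 \<or> j = 3)) \<or> (i = 2 \<and> (j = 1 \<or> j = 2 \<or> j = 3)) \<or> (i = 3 \<and> (j = 1 \<or> j = 2 \<or> j = 3))"
    using h by (elim disjE) (simp_all, arith+)
next
  assume "(i = 0 \<and> j = 1) \<or> (i = 1 \<and> (j = 1 \<or> j = 2 \<or> j = 3)) \<or> (i = 2 \<and> (j = 1 \<or> j = 2 \<or> j = 3)) \<or> (i = 3 \<and> (j = 1 \<or> j = 2 \<or> j = 3))"
  then show "i < 4 \<and> 0 < j \<and> j < [2,4,4,4::nat]!i" by auto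
qed

lemma thV: "theta_V [2,4,4,4] = {TU, TW, TM 0 1, TM 1 1, TM 1 2, TM 1 3, TM 2 1, TM 2 2, TM 2 3, TM 3 1, TM 3 2, TM 3 3}"
proof (intro set_eqI)
  fix z show "z \<in> theta_V [2,4,4,4] \<longleftrightarrow> z \<in> {TU, TW, TM 0 1, TM 1 1, TM 1 2, TM 1 3, TM 2 1, TM 2 2, TM 2 3, TM 3 1, TM 3 2, TM 3 3}"
  proof (cases z)
    case (TM i j)
    have "z \<in> theta_V [2,4,4,4] \<longleftrightarrow> (i < 4 \<and> 0 < j \<and> j < [2,4,4,4::nat]!i)"
      unfolding theta_V_def len4 using TM by simp
    also have "\<dots> \<longleftrightarrow> z \<in> {TU, TW, TM 0 1, TM 1 1, TM 1 2, TM 1 3, TM 2 1, TM 2 2, TM 2 3, TM 3 1, TM 3 2, TM 3 3}"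
      unfolding ij using TM by auto
    finally show ?thesis .
  qed (auto simp: theta_V_def)
qed

fun tv :: "vx \<Rightarrow> theta_vertex" where
  "tv Vu = TU" | "tv Vw = TW" | "tv Vm = TM 0 1"
| "tv Va1 = TM 1 1" | "tv Vb1 = TM 1 2" | "tv Vc1 = TM 1 3"
| "tv Va2 = TM 2 1" | "tv Vb2 = TM 2 2" | "tv Vc2 = TM 2 3"
| "tv Va3 = TM 3 1" | "tv Vb3 = TM 3 2" | "tv Vc3 = TM 3 3"

definition fromv :: "theta_vertex \<Rightarrow> vx" where
  "fromv x = (THE p. tv p = x)"

lemma inj_tv: "inj tv"
proof (rule injI)
  fix p q show "tv p = tv q \<Longrightarrow> p = q" by (cases p; cases q; simp)
qed

lemma fromv_tv[simp]: "fromv (tv p) = p"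
  unfolding fromv_def using inj_tv by (auto dest: injD)

lemma distinct_allv: "distinct allv" by (simp add: allv_def)

lemma thV2: "theta_V [2,4,4,4] = tv ` set allv"
  unfolding thV by (simp add: allv_def)

definition hedges :: "(vx \<times> vx) list" where
  "hedges = [(Vu,Vm),(Vm,Vw),(Vu,Va1),(Va1,Vb1),(Vb1,Vc1),(Vc1,Vw),
     (Vu,Va2),(Va2,Vb2),(Vb2,Vc2),(Vc2,Vw),(Vu,Va3),(Va3,Vb3),(Vb3,Vc3),(Vc3,Vw)]"

definition hedge :: "vx \<Rightarrow> vx \<Rightarrow> bool" where
  "hedge p q = ((p,q) \<in> set hedges \<or> (q,p) \<in> set hedges)"

lemma len4': "length [2,4,4,4::nat] = 4" by simp

lemma ij2: "(i < 4 \<and> j < [2,4,4,4::nat]!i) \<longleftrightarrow> (i,j) \<in> set [(0,0),(0,1),(1,0),(1,1),(1,2),(1,3),(2,0),(2,1),(2,2),(2,3),(3,0),(3,1),(3,2),(3,3)]"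
proof
  assume h: "i < 4 \<and> j < [2,4,4,4::nat]!i"
  then have "i = 0 \<or> i = 1 \<or> i = 2 \<or> i = 3" by arith
  then show "(i,j) \<in> set [(0,0),(0,1),(1,0),(1,1),(1,2),(1,3),(2,0),(2,1),(2,2),(2,3),(3,0),(3,1),(3,2),(3,3)]"
    using h by (elim disjE) (simp_all, arith+)
next
  assume "(i,j) \<in> set [(0,0),(0,1),(1,0),(1,1),(1,2),(1,3),(2,0),(2,1),(2,2),(2,3),(3,0),(3,1),(3,2),(3,3)]"
  then show "i < 4 \<and> j < [2,4,4,4::nat]!i" by auto
qed

lemma ex_pair: "(\<exists>i j. (i,j) \<in> S \<and> P i j) \<longleftrightarrow> (\<exists>ij\<in>S. P (fst ij) (snd ij))"
  by force

lemma thE_list: "theta_E [2,4,4,4] x y \<longleftrightarrow> (\<exists>ij\<in>set [(0,0),(0,1),(1,0),(1,1),(1,2),(1,3),(2,0),(2,1),(2,2),(2,3),(3,0),(3,1),(3,2),(3,3)].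
      ((x = theta_pv [2,4,4,4] (fst ij) (snd ij) \<and> y = theta_pv [2,4,4,4] (fst ij) (Suc (snd ij))) \<or>
       (y = theta_pv [2,4,4,4] (fst ij) (snd ij) \<and> x = theta_pv [2,4,4,4] (fst ij) (Suc (snd ij)))))"
  (is "_ \<longleftrightarrow> ?rhs")
proof -
  have "theta_E [2,4,4,4] x y \<longleftrightarrow> (\<exists>i j. (i < 4 \<and> j < [2,4,4,4::nat]!i) \<and>
      ((x = theta_pv [2,4,4,4] i j \<and> y = theta_pv [2,4,4,4] i (Suc j)) \<or>
       (y = theta_pv [2,4,4,4] i j \<and> x = theta_pv [2,4,4,4] i (Suc j))))"
    unfolding theta_E_def len4' by blast
  also have "\<dots> \<longleftrightarrow> ?rhs" by (simp only: ij2 ex_pair)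
  finally show ?thesis .
qed

lemma Etab: "theta_E [2,4,4,4] (tv p) (tv q) \<longleftrightarrow> hedge p q"
  unfolding thE_list hedge_def hedges_def
  by (cases p; cases q; simp add: theta_pv_def)

lemma sq_arc:
  assumes "graph_square (theta_V [2,4,4,4]) (theta_E [2,4,4,4]) (tv p) (tv q)"
  shows "arc p q \<or> arc q p"
proof -
  have "p \<noteq> q \<and> (hedge p q \<or> (\<exists>r\<in>set allv. hedge p r \<and> hedge r q))"
    using assms unfolding graph_square_def thV2 by (auto simp: Etab)
  then show ?thesis
    unfolding allv_def hedge_def hedges_def arc_def
    by (cases p; cases q; simp)
qed

fun part :: "vx \<Rightarrow> bool" where
  "part Vu = True" | "part Vm = True" | "part Va1 = True" | "part Va2 = True"
| "part Va3 = True" | "part Vb3 = True" | "part _ = False"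

lemma part_arc: "p \<noteq> q \<Longrightarrow> part p = part q \<Longrightarrow> arc p q \<or> arc q p"
  unfolding arc_def by (cases p; cases q; simp)

lemma outdeg: "card {u\<in>set allv. arc p u} < 6"
proof -
  have "{u\<in>set allv. arc p u} = set (outn p)" using in_allv by (auto simp: arc_def)
  moreover have "card (set (outn p)) \<le> length (outn p)" by (rule card_length)
  moreover have "length (outn p) \<le> 5" by (cases p) simp_all
  ultimately show ?thesis by simp
qed

theorem lemma3p6:
  shows "equitably_choosable (theta_V [2,4,4,4])
           (graph_square (theta_V [2,4,4,4]) (theta_E [2,4,4,4])) 6 TYPE('c)"
  unfolding equitably_choosable_def
proof (intro allI impI)
  fix L :: "theta_vertex \<Rightarrow> 'c set"
  assume kL: "k_assignment (theta_V [2,4,4,4]) 6 L"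
  define L' where "L' = (\<lambda>p. L (tv p))"
  have L'p: "finite (L' p) \<and> card (L' p) = 6" for p
  proof -
    have "tv p \<in> theta_V [2,4,4,4]" unfolding thV2 using in_allv by auto
    then show ?thesis using kL unfolding k_assignment_def L'_def by auto
  qed
  have "\<exists>f. (\<forall>v\<in>set allv. f v \<in> L' v) \<and> (\<forall>x\<in>set allv. \<forall>y\<in>set allv. arc x y \<longrightarrow> f x \<noteq> f y)"
  proof (rule kernel_coloring)
    show "finite (set allv)" by simp
  next
    fix X :: "vx set" assume "X \<subseteq> set allv"
    show "\<exists>K\<subseteq>X. (\<forall>x\<in>K. \<forall>y\<in>K. \<not> arc x y) \<and> (\<forall>v\<in>X. v \<in> K \<or> (\<exists>u\<in>K. arc v u))"
      by (rule kernels)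
  next
    fix v assume "v \<in> set allv"
    show "finite (L' v) \<and> card {u\<in>set allv. arc v u} < card (L' v)"
      using L'p[of v] outdeg[of v] by simp
  qed
  then obtain f' where f'L: "\<forall>v\<in>set allv. f' v \<in> L' v"
    and f'p: "\<forall>x\<in>set allv. \<forall>y\<in>set allv. arc x y \<longrightarrow> f' x \<noteq> f' y" by blast
  have f'L2: "f' p \<in> L (tv p)" for p using f'L in_allv L'_def by auto
  have f'p2: "arc x y \<Longrightarrow> f' x \<noteq> f' y" for x y using f'p in_allv by auto
  define f where "f = (\<lambda>x. f' (fromv x))"
  have cardV: "card (theta_V [2,4,4,4]) = 12"
    unfolding thV2 using inj_tv distinct_allv
    by (simp add: card_image inj_on_subset distinct_card) (simp add: allv_def)
  have cls: "card {v\<in>theta_V [2,4,4,4]. f v = c} \<le> 2" for c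
  proof -
    have "{v\<in>theta_V [2,4,4,4]. f v = c} = tv ` {p\<in>set allv. f' p = c}"
      unfolding thV2 f_def by auto
    then have "card {v\<in>theta_V [2,4,4,4]. f v = c} \<le> card {p\<in>set allv. f' p = c}"
      by (simp add: card_image_le)
    also have "{p\<in>set allv. f' p = c} = {p\<in>set allv. part p \<and> f' p = c} \<union> {p\<in>set allv. \<not> part p \<and> f' p = c}"
      by auto
    also have "card \<dots> \<le> card {p\<in>set allv. part p \<and> f' p = c} + card {p\<in>set allv. \<not> part p \<and> f' p = c}"
      by (rule card_Un_le)
    also have "\<dots> \<le> 1 + 1"
    proof (rule add_mono)
      show "card {p\<in>set allv. part p \<and> f' p = c} \<le> 1"
        unfolding One_nat_def
      proof (subst card_le_Suc0_iff_eq, simp, intro ballI)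
        fix a b assume "a \<in> {p\<in>set allv. part p \<and> f' p = c}" "b \<in> {p\<in>set allv. part p \<and> f' p = c}"
        then show "a = b" using part_arc[of a b] f'p2[of a b] f'p2[of b a] by auto
      qed
      show "card {p\<in>set allv. \<not> part p \<and> f' p = c} \<le> 1"
        unfolding One_nat_def
      proof (subst card_le_Suc0_iff_eq, simp, intro ballI)
        fix a b assume "a \<in> {p\<in>set allv. \<not> part p \<and> f' p = c}" "b \<in> {p\<in>set allv. \<not> part p \<and> f' p = c}"
        then show "a = b" using part_arc[of a b] f'p2[of a b] f'p2[of b a] by auto
      qed
    qed
    finally show ?thesis by simp
  qed
  show "\<exists>f. equitable_L_coloring (theta_V [2,4,4,4]) (graph_square (theta_V [2,4,4,4]) (theta_E [2,4,4,4])) 6 L f"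
  proof (intro exI[of _ f])
    show "equitable_L_coloring (theta_V [2,4,4,4]) (graph_square (theta_V [2,4,4,4]) (theta_E [2,4,4,4])) 6 L f"
      unfolding equitable_L_coloring_def
    proof (intro conjI ballI allI impI)
      fix v assume "v \<in> theta_V [2,4,4,4]"
      then obtain p where "v = tv p" unfolding thV2 by auto
      then show "f v \<in> L v" using f'L2 f_def by simp
    next
      fix x y assume xy: "x \<in> theta_V [2,4,4,4]" "y \<in> theta_V [2,4,4,4]"
        "graph_square (theta_V [2,4,4,4]) (theta_E [2,4,4,4]) x y"
      obtain p where p: "x = tv p" using xy(1) unfolding thV2 by auto
      obtain q where q: "y = tv q" using xy(2) unfolding thV2 by auto
      have "arc p q \<or> arc q p" using sq_arc xy(3) p q by simp
      then show "f x \<noteq> f y" using f'p2[of p q] f'p2[of q p] p q f_def by auto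
    next
      fix c
      have "real (card {v\<in>theta_V [2,4,4,4]. f v = c}) \<le> 2" using cls[of c] by simp
      moreover have "of_int \<lceil>real (card (theta_V [2,4,4,4])) / real 6\<rceil> = (2::real)"
        unfolding cardV by simp
      ultimately show "real (card {v\<in>theta_V [2,4,4,4]. f v = c}) \<le> of_int \<lceil>real (card (theta_V [2,4,4,4])) / real 6\<rceil>"
        by simp
    qed
  qed
qed

end
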